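(* For every rational number $s>1$, $g(s)=\frac{s+1}{2s}$.
   Context: Let $\mathbb{F}$ be a finite field and $x_1,\dots,x_p$ a basis of $\mathbb{F}^p$. A $[t\times m,p]$ array code is a $t\times m$ array whose entries (cells) are linear combinations of $x_1,\dots,x_p$. It has the $k$-PIR property (is a $[t\times m,p]$ $k$-PIR array code) if for every $i\in\{1,\dots,p\}$ there exist $k$ pairwise disjoint sets $S_1,\dots,S_k$ of columns such that for every $j$ the vector $x_i$ lies in the linear span of all entries of the columns in $S_j$. Its PIR rate is $k/m$. For a rational $s>1$ and a positive integer $t$ with $st$ an integer, $g(s,t)$ is the largest PIR rate $k/m$ of a $[t\times m,st]$ $k$-PIR array code (over all finite fields, all $m$ and all $k$), and $g(s)=\limsup_{t\to\infty} g(s,t)$, with $t$ ranging over positive integers such that $st$ is an integer. *)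

theory Defs
  imports Complex_Main "HOL-Algebra.Ring" "HOL-Library.Extended_Real" "HOL-Library.Liminf_Limsup"
begin

text \<open>A [t x m, p] array code over a field R: cell (r,c) (r < t, c < m) is the linear
combination of the basis vectors x_0..x_{p-1} with coefficient vector (\<lambda>l. A r c l).
Finite fields are represented (up to isomorphism) with carrier a set of naturals.\<close>

definition is_array_code :: "nat ring \<Rightarrow> nat \<Rightarrow> nat \<Rightarrow> nat \<Rightarrow> (nat \<Rightarrow> nat \<Rightarrow> nat \<Rightarrow> nat) \<Rightarrow> bool" where
  "is_array_code R t m p A \<longleftrightarrow> (\<forall>r<t. \<forall>c<m. \<forall>l<p. A r c l \<in> carrier R)"

definition in_col_span :: "nat ring \<Rightarrow> nat \<Rightarrow> nat \<Rightarrow> (nat \<Rightarrow> nat \<Rightarrow> nat \<Rightarrow> nat) \<Rightarrow> nat set \<Rightarrow> nat \<Rightarrow> bool" where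
  "in_col_span R t p A S i \<longleftrightarrow>
     (\<exists>coef :: nat \<times> nat \<Rightarrow> nat. (\<forall>rc \<in> {0..<t} \<times> S. coef rc \<in> carrier R) \<and>
        (\<forall>l<p. finsum R (\<lambda>(r, c). coef (r, c) \<otimes>\<^bsub>R\<^esub> A r c l) ({0..<t} \<times> S)
               = (if l = i then \<one>\<^bsub>R\<^esub> else \<zero>\<^bsub>R\<^esub>)))"

definition is_PIR_array_code :: "nat ring \<Rightarrow> nat \<Rightarrow> nat \<Rightarrow> nat \<Rightarrow> nat \<Rightarrow> (nat \<Rightarrow> nat \<Rightarrow> nat \<Rightarrow> nat) \<Rightarrow> bool" where
  "is_PIR_array_code R t m p k A \<longleftrightarrow> is_array_code R t m p A \<and>
     (\<forall>i<p. \<exists>S :: nat \<Rightarrow> nat set.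
        (\<forall>j<k. S j \<subseteq> {0..<m}) \<and>
        (\<forall>j<k. \<forall>j'<k. j \<noteq> j' \<longrightarrow> S j \<inter> S j' = {}) \<and>
        (\<forall>j<k. in_col_span R t p A (S j) i))"

text \<open>g(s,t): supremum (the paper's "largest") PIR rate k/m over all finite fields, m, k.\<close>
definition g_st :: "rat \<Rightarrow> nat \<Rightarrow> ereal" where
  "g_st s t = Sup {ereal (real k / real m) | k m. m > 0 \<and>
      (\<exists>(R :: nat ring) p A. field R \<and> finite (carrier R) \<and> of_nat p = s * of_nat t \<and>
         is_PIR_array_code R t m p k A)}"

definition g_s :: "rat \<Rightarrow> ereal" where
  "g_s s = Limsup (inf sequentially (principal {t :: nat. t > 0 \<and> s * of_nat t \<in> \<int>})) (g_st s)"

end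

theory Submission
  imports Defs
begin



definition Z2 :: "nat ring" where
  "Z2 = \<lparr>carrier = {0,1}, monoid.mult = (\<lambda>x y. x * y), one = 1, zero = 0, add = (\<lambda>x y. (x + y) mod 2)\<rparr>"

lemma Z2_simps [simp]: "carrier Z2 = {0,1}" "mult Z2 = (\<lambda>x y. x * y)" "one Z2 = 1"
  "zero Z2 = 0" "add Z2 = (\<lambda>x y. (x + y) mod 2)"
  by (simp_all add: Z2_def)

lemma Z2_cring: "cring Z2"
proof (rule cringI)
  show "abelian_group Z2"
  proof (rule abelian_groupI)
    fix x assume "x \<in> carrier Z2"
    then show "\<exists>y\<in>carrier Z2. y \<oplus>\<^bsub>Z2\<^esub> x = \<zero>\<^bsub>Z2\<^esub>"
      by (intro bexI[of _ x]) auto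
  qed (auto simp: mod_add_left_eq mod_add_right_eq add.assoc)
  show "comm_monoid Z2"
    by (rule comm_monoidI) auto
qed auto

lemma Z2_field: "field Z2"
proof -
  interpret cring Z2 by (rule Z2_cring)
  have "Units Z2 = {1}"
    unfolding Units_def by auto
  then show ?thesis by (intro cring_fieldI) auto
qed

lemma Z2_finsum:
  assumes "finite A" "f \<in> A \<rightarrow> {0,1}"
  shows "finsum Z2 f A = (\<Sum>a\<in>A. f a) mod 2"
  using assms
proof (induction A rule: finite_induct)
  case empty
  interpret cring Z2 by (rule Z2_cring)
  show ?case by simp
next
  case (insert x F)
  interpret cring Z2 by (rule Z2_cring)
  have "finsum Z2 f (insert x F) = f x \<oplus>\<^bsub>Z2\<^esub> finsum Z2 f F"
    using insert by (intro finsum_insert) auto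
  also have "\<dots> = (f x + (\<Sum>a\<in>F. f a) mod 2) mod 2" using insert by simp
  also have "\<dots> = (\<Sum>a\<in>insert x F. f a) mod 2" using insert by (simp add: mod_add_right_eq)
  finally show ?case .
qed

context field
begin

lemma rank_bound:
  assumes "finite D" "I \<subseteq> D" "\<forall>r<t. \<forall>l\<in>D. v r l \<in> carrier R"
    "\<forall>i\<in>I. \<exists>\<alpha>. (\<forall>r<t. \<alpha> r \<in> carrier R) \<and>
        (\<forall>l\<in>D. (\<Oplus>r\<in>{..<t}. \<alpha> r \<otimes> v r l) = (if l = i then \<one> else \<zero>))"
  shows "card I \<le> t"
  using assms
proof (induction t arbitrary: v I)
  case 0
  have "I = {}"
  proof (rule ccontr)
    assume "I \<noteq> {}"
    then obtain i where i: "i \<in> I" by auto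
    then obtain \<alpha> where "\<forall>l\<in>D. (\<Oplus>r\<in>{..<0::nat}. \<alpha> r \<otimes> v r l) = (if l = i then \<one> else \<zero>)"
      using 0 by blast
    moreover have "i \<in> D" using i 0 by auto
    ultimately have "\<zero> = \<one>" by force
    then show False by simp
  qed
  then show ?case by simp
next
  case (Suc t)
  define w where "w = v t"
  have wc: "\<forall>l\<in>D. w l \<in> carrier R" using Suc.prems(3) unfolding w_def by auto
  have vc: "\<forall>r<t. \<forall>l\<in>D. v r l \<in> carrier R" using Suc.prems(3) by auto
  have split: "(\<Oplus>r\<in>{..<Suc t}. \<alpha> r \<otimes> v r l) = (\<Oplus>r\<in>{..<t}. \<alpha> r \<otimes> v r l) \<oplus> \<alpha> t \<otimes> w l"
    if "\<forall>r<Suc t. \<alpha> r \<in> carrier R" "l \<in> D" for \<alpha> l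
  proof -
    have "{..<Suc t} = insert t {..<t}" by auto
    then have "(\<Oplus>r\<in>{..<Suc t}. \<alpha> r \<otimes> v r l) = \<alpha> t \<otimes> v t l \<oplus> (\<Oplus>r\<in>{..<t}. \<alpha> r \<otimes> v r l)"
      using that Suc.prems(3) by (simp add: finsum_insert Pi_def)
    then show ?thesis using that Suc.prems(3) unfolding w_def
      by (simp add: Pi_def add.m_comm)
  qed
  show ?case
  proof (cases "\<forall>l\<in>D. w l = \<zero>")
    case True
    have "card I \<le> t"
    proof (rule Suc.IH[of I v])
      show "\<forall>i\<in>I. \<exists>\<alpha>. (\<forall>r<t. \<alpha> r \<in> carrier R) \<and>
        (\<forall>l\<in>D. (\<Oplus>r\<in>{..<t}. \<alpha> r \<otimes> v r l) = (if l = i then \<one> else \<zero>))"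
      proof
        fix i assume "i \<in> I"
        then obtain \<alpha> where a: "\<forall>r<Suc t. \<alpha> r \<in> carrier R"
          "\<forall>l\<in>D. (\<Oplus>r\<in>{..<Suc t}. \<alpha> r \<otimes> v r l) = (if l = i then \<one> else \<zero>)"
          using Suc.prems(4) by blast
        have "\<forall>l\<in>D. (\<Oplus>r\<in>{..<t}. \<alpha> r \<otimes> v r l) = (if l = i then \<one> else \<zero>)"
        proof
          fix l assume l: "l \<in> D"
          have "(\<Oplus>r\<in>{..<t}. \<alpha> r \<otimes> v r l) \<in> carrier R"
            using a(1) vc l by (intro finsum_closed) (auto simp: Pi_def)
          then show "(\<Oplus>r\<in>{..<t}. \<alpha> r \<otimes> v r l) = (if l = i then \<one> else \<zero>)"
            using split[OF a(1) l] a(2) l True a(1) by simp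
        qed
        then show "\<exists>\<alpha>. (\<forall>r<t. \<alpha> r \<in> carrier R) \<and>
          (\<forall>l\<in>D. (\<Oplus>r\<in>{..<t}. \<alpha> r \<otimes> v r l) = (if l = i then \<one> else \<zero>))"
          by (intro exI[of _ \<alpha>]) (use a(1) in auto)
      qed
    qed (use Suc.prems vc in auto)
    then show ?thesis by simp
  next
    case False
    then obtain l0 where l0: "l0 \<in> D" "w l0 \<noteq> \<zero>" by auto
    have w0c: "w l0 \<in> carrier R" using wc l0 by auto
    have w0U: "w l0 \<in> Units R" using field_Units l0 w0c by auto
    define q where "q = inv (w l0)"
    have qc: "q \<in> carrier R" unfolding q_def using w0U by auto
    have wq: "w l0 \<otimes> q = \<one>" unfolding q_def using w0U by auto
    define v' where "v' = (\<lambda>r l. v r l \<oplus> (v r l0 \<otimes> (\<ominus> q)) \<otimes> w l)"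
    have v'c: "\<forall>r<t. \<forall>l\<in>D. v' r l \<in> carrier R"
      unfolding v'_def using vc wc qc l0 by auto
    have "card (I - {l0}) \<le> t"
    proof (rule Suc.IH[of "I - {l0}" v'])
      show "\<forall>i\<in>I - {l0}. \<exists>\<alpha>. (\<forall>r<t. \<alpha> r \<in> carrier R) \<and>
        (\<forall>l\<in>D. (\<Oplus>r\<in>{..<t}. \<alpha> r \<otimes> v' r l) = (if l = i then \<one> else \<zero>))"
      proof
        fix i assume i: "i \<in> I - {l0}"
        then obtain \<alpha> where a: "\<forall>r<Suc t. \<alpha> r \<in> carrier R"
          "\<forall>l\<in>D. (\<Oplus>r\<in>{..<Suc t}. \<alpha> r \<otimes> v r l) = (if l = i then \<one> else \<zero>)"
          using Suc.prems(4) by blast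
        define S where "S = (\<lambda>l. (\<Oplus>r\<in>{..<t}. \<alpha> r \<otimes> v r l))"
        have Sc: "S l \<in> carrier R" if "l \<in> D" for l
          unfolding S_def using a(1) vc that by (intro finsum_closed) (auto simp: Pi_def)
        have eq: "S l \<oplus> \<alpha> t \<otimes> w l = (if l = i then \<one> else \<zero>)" if "l \<in> D" for l
          using split[OF a(1) that] a(2) that unfolding S_def by simp
        have at: "\<alpha> t \<in> carrier R" using a(1) by auto
        have S0: "S l0 = \<ominus> (\<alpha> t \<otimes> w l0)"
          using eq[OF l0(1)] i Sc[OF l0(1)] at w0c
          by (intro sum_zero_eq_neg) auto
        have Y: "(\<Oplus>r\<in>{..<t}. \<alpha> r \<otimes> (v r l0 \<otimes> (\<ominus> q))) = \<alpha> t"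
        proof -
          have "(\<Oplus>r\<in>{..<t}. \<alpha> r \<otimes> (v r l0 \<otimes> (\<ominus> q))) = (\<Oplus>r\<in>{..<t}. (\<alpha> r \<otimes> v r l0) \<otimes> (\<ominus> q))"
            using a(1) vc l0 qc by (intro finsum_cong') (auto simp: m_assoc)
          also have "\<dots> = S l0 \<otimes> (\<ominus> q)"
            unfolding S_def using a(1) vc l0 qc by (subst finsum_ldistr) (auto simp: Pi_def)
          also have "\<dots> = \<alpha> t \<otimes> (w l0 \<otimes> q)"
          proof -
            have "\<ominus> (\<alpha> t \<otimes> w l0) \<otimes> \<ominus> q = \<ominus> ((\<alpha> t \<otimes> w l0) \<otimes> \<ominus> q)"
              using at w0c qc by (intro l_minus) auto
            also have "\<dots> = \<ominus> (\<ominus> ((\<alpha> t \<otimes> w l0) \<otimes> q))"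
              using at w0c qc by (subst r_minus) auto
            also have "\<dots> = (\<alpha> t \<otimes> w l0) \<otimes> q"
              using at w0c qc by (intro minus_minus) auto
            also have "\<dots> = \<alpha> t \<otimes> (w l0 \<otimes> q)"
              using at w0c qc by (intro m_assoc) auto
            finally show ?thesis unfolding S0 .
          qed
          finally show ?thesis using wq at by simp
        qed
        have "\<forall>l\<in>D. (\<Oplus>r\<in>{..<t}. \<alpha> r \<otimes> v' r l) = (if l = i then \<one> else \<zero>)"
        proof
          fix l assume l: "l \<in> D"
          have "(\<Oplus>r\<in>{..<t}. \<alpha> r \<otimes> v' r l) =
              (\<Oplus>r\<in>{..<t}. \<alpha> r \<otimes> v r l \<oplus> (\<alpha> r \<otimes> (v r l0 \<otimes> (\<ominus> q))) \<otimes> w l)"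
            unfolding v'_def using a(1) vc l0 qc l wc
            by (intro finsum_cong') (auto simp: r_distr m_assoc)
          also have "\<dots> = S l \<oplus> (\<Oplus>r\<in>{..<t}. (\<alpha> r \<otimes> (v r l0 \<otimes> (\<ominus> q))) \<otimes> w l)"
            unfolding S_def using a(1) vc l0 qc l wc
            by (subst finsum_addf) (auto simp: Pi_def)
          also have "\<dots> = S l \<oplus> \<alpha> t \<otimes> w l"
            using a(1) vc l0 qc l wc
            by (subst finsum_ldistr[symmetric]) (auto simp: Pi_def Y)
          finally show "(\<Oplus>r\<in>{..<t}. \<alpha> r \<otimes> v' r l) = (if l = i then \<one> else \<zero>)"
            using eq[OF l] by simp
        qed
        then show "\<exists>\<alpha>. (\<forall>r<t. \<alpha> r \<in> carrier R) \<and>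
          (\<forall>l\<in>D. (\<Oplus>r\<in>{..<t}. \<alpha> r \<otimes> v' r l) = (if l = i then \<one> else \<zero>))"
          by (intro exI[of _ \<alpha>]) (use a(1) in auto)
      qed
    qed (use Suc.prems v'c in auto)
    moreover have "card I \<le> card (I - {l0}) + 1"
      using Suc.prems(1,2) finite_subset[OF Suc.prems(2,1)]
      by (cases "l0 \<in> I") (auto simp: card_Diff_singleton_if)
    ultimately show ?thesis by simp
  qed
qed

end




lemma card_filter_sum: "finite A \<Longrightarrow> card {x\<in>A. P x} = (\<Sum>x\<in>A. if P x then 1 else 0)"
  by (simp add: sum.inter_filter[symmetric])

lemma col_span_nonempty:
  fixes R (structure)
  assumes "field R" "i < p" "in_col_span R t p A S i"
  shows "S \<noteq> {}"
proof
  assume "S = {}"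
  interpret field R by fact
  from assms(3) obtain coef where
    "\<forall>l<p. finsum R (\<lambda>(r, c). coef (r, c) \<otimes>\<^bsub>R\<^esub> A r c l) ({0..<t} \<times> S)
               = (if l = i then \<one>\<^bsub>R\<^esub> else \<zero>\<^bsub>R\<^esub>)"
    unfolding in_col_span_def by blast
  then have "finsum R (\<lambda>(r, c). coef (r, c) \<otimes>\<^bsub>R\<^esub> A r c i) ({0..<t} \<times> S) = \<one>"
    using assms(2) by auto
  then show False using \<open>S = {}\<close> by simp
qed

lemma single_col_bound:
  fixes R (structure)
  assumes "field R" "is_array_code R t m p A" "c < m"
  shows "card {i\<in>{..<p}. in_col_span R t p A {c} i} \<le> t"
proof -
  interpret field R by fact
  show ?thesis
  proof (rule rank_bound[of "{..<p}" _ t "\<lambda>r l. A r c l"])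
    show "\<forall>r<t. \<forall>l\<in>{..<p}. A r c l \<in> carrier R"
      using assms(2,3) unfolding is_array_code_def by auto
    show "\<forall>i\<in>{i \<in> {..<p}. in_col_span R t p A {c} i}. \<exists>\<alpha>. (\<forall>r<t. \<alpha> r \<in> carrier R) \<and>
        (\<forall>l\<in>{..<p}. (\<Oplus>r\<in>{..<t}. \<alpha> r \<otimes> A r c l) = (if l = i then \<one> else \<zero>))"
    proof
      fix i assume "i \<in> {i \<in> {..<p}. in_col_span R t p A {c} i}"
      then obtain coef where co: "\<forall>rc \<in> {0..<t} \<times> {c}. coef rc \<in> carrier R"
        "\<forall>l<p. finsum R (\<lambda>(r, c). coef (r, c) \<otimes> A r c l) ({0..<t} \<times> {c})
               = (if l = i then \<one> else \<zero>)"
        unfolding in_col_span_def by blast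
      have "(\<Oplus>r\<in>{..<t}. coef (r, c) \<otimes> A r c l) = (if l = i then \<one> else \<zero>)" if l: "l < p" for l
      proof -
        have img: "{0..<t} \<times> {c} = (\<lambda>r. (r, c)) ` {..<t}" by auto
        have "finsum R (\<lambda>(r, c). coef (r, c) \<otimes> A r c l) ({0..<t} \<times> {c}) =
              (\<Oplus>r\<in>{..<t}. coef (r, c) \<otimes> A r c l)"
          unfolding img
          by (subst finsum_reindex) (use co(1) assms(2,3) l in \<open>auto simp: is_array_code_def inj_on_def\<close>)
        then show ?thesis using co(2) l by simp
      qed
      then show "\<exists>\<alpha>. (\<forall>r<t. \<alpha> r \<in> carrier R) \<and>
        (\<forall>l\<in>{..<p}. (\<Oplus>r\<in>{..<t}. \<alpha> r \<otimes> A r c l) = (if l = i then \<one> else \<zero>))"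
        by (intro exI[of _ "\<lambda>r. coef (r, c)"]) (use co(1) in auto)
    qed
  qed auto
qed

lemma upper_comb:
  assumes R: "field R" and code: "is_PIR_array_code R t m p k A"
  shows "2 * p * k \<le> m * (p + t)"
proof -
  define P where "P = (\<lambda>i (S :: nat \<Rightarrow> nat set). (\<forall>j<k. S j \<subseteq> {0..<m}) \<and>
        (\<forall>j<k. \<forall>j'<k. j \<noteq> j' \<longrightarrow> S j \<inter> S j' = {}) \<and>
        (\<forall>j<k. in_col_span R t p A (S j) i))"
  have "\<forall>i<p. \<exists>S. P i S" using code by (simp add: is_PIR_array_code_def P_def)
  then have "\<forall>i. \<exists>S. i < p \<longrightarrow> P i S" by auto
  from choice[OF this] obtain SS where SS: "\<forall>i<p. P i (SS i)" by blast
  define Q where "Q = (\<lambda>i c. in_col_span R t p A {c} i)"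
  define a where "a = (\<lambda>i. card {j\<in>{..<k}. card (SS i j) = 1})"
  have arr: "is_array_code R t m p A" using code unfolding is_PIR_array_code_def by auto
  have key: "2 * k \<le> m + a i \<and> a i \<le> card {c\<in>{..<m}. Q i c}" if i: "i < p" for i
  proof -
    have sub: "\<forall>j<k. SS i j \<subseteq> {0..<m}" and dis: "\<forall>j<k. \<forall>j'<k. j \<noteq> j' \<longrightarrow> SS i j \<inter> SS i j' = {}"
      and sp: "\<forall>j<k. in_col_span R t p A (SS i j) i"
      using SS i unfolding P_def by auto
    have fin: "finite (SS i j)" if "j < k" for j
    proof -
      have "SS i j \<subseteq> {0..<m}" using sub that by auto
      then show ?thesis by (rule finite_subset) simp
    qed
    have ne: "SS i j \<noteq> {}" if "j < k" for j using col_span_nonempty[OF R i] sp that by blast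
    have "card (\<Union>j\<in>{..<k}. SS i j) = (\<Sum>j\<in>{..<k}. card (SS i j))"
      using fin dis by (intro card_UN_disjoint) auto
    moreover have "card (\<Union>j\<in>{..<k}. SS i j) \<le> m"
    proof -
      have "(\<Union>j\<in>{..<k}. SS i j) \<subseteq> {0..<m}" using sub by auto
      then have "card (\<Union>j\<in>{..<k}. SS i j) \<le> card {0..<m}" by (intro card_mono) auto
      then show ?thesis by simp
    qed
    ultimately have s1: "(\<Sum>j\<in>{..<k}. card (SS i j)) \<le> m" by simp
    have "(\<Sum>j\<in>{..<k}. (2::nat)) \<le> (\<Sum>j\<in>{..<k}. card (SS i j) + (if card (SS i j) = 1 then 1 else 0))"
    proof (rule sum_mono)
      fix j assume "j \<in> {..<k}"
      then have "card (SS i j) \<ge> 1" using fin ne by (simp add: Suc_leI card_gt_0_iff)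
      then show "2 \<le> card (SS i j) + (if card (SS i j) = 1 then 1 else 0)" by auto
    qed
    also have "\<dots> = (\<Sum>j\<in>{..<k}. card (SS i j)) + a i"
      unfolding a_def using card_filter_sum[of "{..<k}" "\<lambda>j. card (SS i j) = 1"] by (simp add: sum.distrib)
    finally have A1: "2 * k \<le> m + a i" using s1 by simp
    have "a i \<le> card {c\<in>{..<m}. Q i c}"
      unfolding a_def
    proof (rule card_inj_on_le[of "\<lambda>j. the_elem (SS i j)"])
      show "inj_on (\<lambda>j. the_elem (SS i j)) {j \<in> {..<k}. card (SS i j) = 1}"
      proof (rule inj_onI)
        fix j j' assume j: "j \<in> {j \<in> {..<k}. card (SS i j) = 1}" and j': "j' \<in> {j \<in> {..<k}. card (SS i j) = 1}"
          and eq: "the_elem (SS i j) = the_elem (SS i j')"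
        from j obtain x where x: "SS i j = {x}" by (auto simp: card_1_singleton_iff)
        from j' obtain y where y: "SS i j' = {y}" by (auto simp: card_1_singleton_iff)
        show "j = j'"
        proof (rule ccontr)
          assume "j \<noteq> j'"
          then have "SS i j \<inter> SS i j' = {}" using dis j j' by auto
          moreover have "x = y" using eq x y by simp
          ultimately show False using x y by auto
        qed
      qed
      show "(\<lambda>j. the_elem (SS i j)) ` {j \<in> {..<k}. card (SS i j) = 1} \<subseteq> {c \<in> {..<m}. Q i c}"
      proof
        fix c assume "c \<in> (\<lambda>j. the_elem (SS i j)) ` {j \<in> {..<k}. card (SS i j) = 1}"
        then obtain j where j: "j < k" "card (SS i j) = 1" "c = the_elem (SS i j)" by auto
        then obtain x where x: "SS i j = {x}" by (metis card_1_singletonE)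
        then show "c \<in> {c \<in> {..<m}. Q i c}" using j sub sp unfolding Q_def by auto
      qed
    qed auto
    then show ?thesis using A1 by simp
  qed
  have "(\<Sum>i\<in>{..<p}. 2 * k) \<le> (\<Sum>i\<in>{..<p}. m + card {c\<in>{..<m}. Q i c})"
  proof (rule sum_mono)
    fix i assume "i \<in> {..<p}"
    then have "2 * k \<le> m + a i \<and> a i \<le> card {c\<in>{..<m}. Q i c}" using key by auto
    then show "2 * k \<le> m + card {c\<in>{..<m}. Q i c}" by linarith
  qed
  also have "\<dots> = p * m + (\<Sum>i\<in>{..<p}. card {c\<in>{..<m}. Q i c})" by (simp add: sum.distrib)
  also have "(\<Sum>i\<in>{..<p}. card {c\<in>{..<m}. Q i c}) = (\<Sum>c\<in>{..<m}. card {i\<in>{..<p}. Q i c})"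
  proof -
    have "(\<Sum>i\<in>{..<p}. card {c\<in>{..<m}. Q i c}) = (\<Sum>i\<in>{..<p}. \<Sum>c\<in>{..<m}. if Q i c then 1 else 0)"
      by (intro sum.cong refl card_filter_sum) simp
    also have "\<dots> = (\<Sum>c\<in>{..<m}. \<Sum>i\<in>{..<p}. if Q i c then 1 else 0)" by (rule sum.swap)
    also have "\<dots> = (\<Sum>c\<in>{..<m}. card {i\<in>{..<p}. Q i c})"
      by (intro sum.cong refl card_filter_sum[symmetric]) simp
    finally show ?thesis .
  qed
  also have "\<dots> \<le> (\<Sum>c\<in>{..<m}. t)"
    using single_col_bound[OF R arr] unfolding Q_def by (intro sum_mono) auto
  finally show ?thesis by (simp add: algebra_simps)
qed




lemma Z2_span_single:
  assumes A01: "\<forall>r c l. A r c l \<in> {0,1}" and r0: "r0 < t"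
    and val: "\<forall>l<p. A r0 n l = (if l = i then 1 else 0)"
  shows "in_col_span Z2 t p A {n} i"
  unfolding in_col_span_def
proof (intro exI[of _ "\<lambda>(r, c). if r = r0 then 1 else 0"] conjI ballI allI impI)
  fix rc assume "rc \<in> {0..<t} \<times> {n}"
  show "(case rc of (r, c) \<Rightarrow> if r = r0 then 1 else 0) \<in> carrier Z2" by (auto split: prod.splits)
next
  fix l assume l: "l < p"
  let ?f = "\<lambda>(r, c). (case (r, c) of (r, c) \<Rightarrow> if r = r0 then 1 else 0) \<otimes>\<^bsub>Z2\<^esub> A r c l"
  have "finsum Z2 ?f ({0..<t} \<times> {n}) = (\<Sum>x\<in>{0..<t} \<times> {n}. ?f x) mod 2"
    using A01 by (intro Z2_finsum) (auto simp: Pi_def)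
  also have "(\<Sum>x\<in>{0..<t} \<times> {n}. ?f x) = (\<Sum>r\<in>{0..<t}. ?f (r, n))"
    by (subst sum.cartesian_product[symmetric]) simp
  also have "\<dots> = (\<Sum>r\<in>{0..<t}. if r = r0 then A r0 n l else 0)"
    by (intro sum.cong) auto
  also have "\<dots> = A r0 n l" using r0 by simp
  finally show "finsum Z2 ?f ({0..<t} \<times> {n}) = (if l = i then \<one>\<^bsub>Z2\<^esub> else \<zero>\<^bsub>Z2\<^esub>)"
    using val l by simp
qed

lemma Z2_span_pair:
  assumes A01: "\<forall>r c l. A r c l \<in> {0,1}" and L: "L < t" and ne: "n1 \<noteq> n2"
    and val: "\<forall>l<p. (A L n1 l + A L n2 l) mod 2 = (if l = i then 1 else 0)"
  shows "in_col_span Z2 t p A {n1, n2} i"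
  unfolding in_col_span_def
proof (intro exI[of _ "\<lambda>(r, c). if r = L then 1 else 0"] conjI ballI allI impI)
  fix rc assume "rc \<in> {0..<t} \<times> {n1, n2}"
  show "(case rc of (r, c) \<Rightarrow> if r = L then 1 else 0) \<in> carrier Z2" by (auto split: prod.splits)
next
  fix l assume l: "l < p"
  let ?f = "\<lambda>(r, c). (case (r, c) of (r, c) \<Rightarrow> if r = L then 1 else 0) \<otimes>\<^bsub>Z2\<^esub> A r c l"
  have "finsum Z2 ?f ({0..<t} \<times> {n1, n2}) = (\<Sum>x\<in>{0..<t} \<times> {n1, n2}. ?f x) mod 2"
    using A01 by (intro Z2_finsum) (auto simp: Pi_def)
  also have "(\<Sum>x\<in>{0..<t} \<times> {n1, n2}. ?f x) = (\<Sum>r\<in>{0..<t}. \<Sum>c\<in>{n1, n2}. ?f (r, c))"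
    by (subst sum.cartesian_product[symmetric]) simp
  also have "\<dots> = (\<Sum>r\<in>{0..<t}. if r = L then A L n1 l + A L n2 l else 0)"
    using ne by (intro sum.cong) auto
  also have "\<dots> = A L n1 l + A L n2 l" using L by simp
  finally show "finsum Z2 ?f ({0..<t} \<times> {n1, n2}) = (if l = i then \<one>\<^bsub>Z2\<^esub> else \<zero>\<^bsub>Z2\<^esub>)"
    using val l by simp
qed




lemma construction:
  assumes t: "0 < t" "t < p"
  shows "\<exists>A. is_PIR_array_code Z2 t (p * 2^p) p (2^(p-1) * (p + (t - 1))) A"
proof -
  define L where "L = t - 1"
  have Lt: "L < t" "L < p" unfolding L_def using t by auto
  define X where "X = {..<p} \<times> Pow {..<p}"
  have finX: "finite X" unfolding X_def by simp
  have cardX: "card X = p * 2^p" unfolding X_def by (simp add: card_cartesian_product card_Pow)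
  obtain h where h: "bij_betw h {0..<card X} X" using ex_bij_betw_nat_finite[OF finX] by blast
  define h' where "h' = inv_into {0..<card X} h"
  have h': "bij_betw h' X {0..<card X}" unfolding h'_def by (rule bij_betw_inv_into[OF h])
  have hh': "h (h' x) = x" if "x \<in> X" for x
    unfolding h'_def using h that by (simp add: bij_betw_inv_into_right)
  define sym where "sym = (\<lambda>c r. if c + r < p then c + r else c + r - p)"
  define A where "A = (\<lambda>r n l. if r < L then (if sym (fst (h n)) r = l then 1 else 0)
      else if r = L \<and> l \<in> snd (h n) then 1 else (0::nat))"
  have A01: "\<forall>r c l. A r c l \<in> {0,1}" unfolding A_def by auto
  define k where "k = 2^(p-1) * (p + (t - 1))"
  have "is_PIR_array_code Z2 t (card X) p k A"
    unfolding is_PIR_array_code_def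
  proof (intro conjI allI impI)
    show "is_array_code Z2 t (card X) p A" unfolding is_array_code_def using A01 by auto
  next
    fix i assume i: "i < p"
    define Cin where "Cin = {c\<in>{..<p}. \<exists>r<L. sym c r = i}"
    define Cout where "Cout = {..<p} - Cin"
    define F1 where "F1 = (\<lambda>x. {x}) ` (Cin \<times> Pow {..<p})"
    define F2 where "F2 = (\<lambda>(c, W). {(c, W), (c, insert i W)}) ` (Cout \<times> Pow ({..<p} - {i}))"
    define F where "F = F1 \<union> F2"
    have CinP: "Cin \<subseteq> {..<p}" unfolding Cin_def by auto
    have finCin: "finite Cin" using CinP finite_subset by blast
    have cardCin: "L \<le> card Cin"
    proof -
      let ?g = "\<lambda>r. if r \<le> i then i - r else i + p - r"
      have sub: "?g ` {..<L} \<subseteq> Cin"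
      proof
        fix c assume "c \<in> ?g ` {..<L}"
        then obtain r where r: "r < L" "c = ?g r" by auto
        have "c < p \<and> sym c r = i"
        proof (cases "r \<le> i")
          case True
          then show ?thesis using r i unfolding sym_def by simp
        next
          case False
          then show ?thesis using r i Lt unfolding sym_def by simp
        qed
        then show "c \<in> Cin" unfolding Cin_def using r(1) by auto
      qed
      have inj: "inj_on ?g {..<L}"
      proof (rule inj_onI)
        fix r1 r2 assume "r1 \<in> {..<L}" "r2 \<in> {..<L}" "?g r1 = ?g r2"
        then show "r1 = r2" using Lt i by (simp split: if_splits)
      qed
      have "card {..<L} \<le> card Cin"
        using card_inj_on_le[OF inj sub finCin] .
      then show ?thesis by simp
    qed
    have cardCout: "card Cout = p - card Cin"
      unfolding Cout_def using CinP by (simp add: card_Diff_subset finCin)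
    have finF1: "finite F1" unfolding F1_def using finCin by simp
    have finF2: "finite F2" unfolding F2_def Cout_def by simp
    have cF1: "card F1 = card Cin * 2^p"
      unfolding F1_def by (subst card_image) (auto simp: inj_on_def card_cartesian_product card_Pow)
    have injF2: "inj_on (\<lambda>(c, W). {(c, W), (c, insert i W)}) (Cout \<times> Pow ({..<p} - {i}))"
    proof (rule inj_onI)
      fix x y assume x: "x \<in> Cout \<times> Pow ({..<p} - {i})" and y: "y \<in> Cout \<times> Pow ({..<p} - {i})"
        and eq: "(\<lambda>(c, W). {(c, W), (c, insert i W)}) x = (\<lambda>(c, W). {(c, W), (c, insert i W)}) y"
      obtain c W where cW: "x = (c, W)" by force
      obtain c' W' where cW': "y = (c', W')" by force
      have iW: "i \<notin> W" "i \<notin> W'" using x y cW cW' by auto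
      have E: "{(c, W), (c, insert i W)} = {(c', W'), (c', insert i W')}" using eq cW cW' by simp
      have "(c, W) \<in> {(c, W), (c, insert i W)}" by simp
      then have "(c, W) \<in> {(c', W'), (c', insert i W')}" unfolding E .
      then have "(c, W) = (c', W') \<or> (c, W) = (c', insert i W')" by simp
      then show "x = y" using iW cW cW' by auto
    qed
    have cP: "card (Pow ({..<p} - {i})) = 2^(p-1)" using i by (simp add: card_Pow)
    have cF2: "card F2 = card Cout * 2^(p-1)"
      unfolding F2_def by (subst card_image[OF injF2]) (simp add: card_cartesian_product cP)
    have disj12: "F1 \<inter> F2 = {}" unfolding F1_def F2_def Cout_def by auto
    have finF: "finite F" unfolding F_def using finF1 finF2 by simp
    have cardF: "k \<le> card F"
    proof -
      have "card F = card Cin * 2^p + (p - card Cin) * 2^(p-1)"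
        unfolding F_def using finF1 finF2 disj12 cF1 cF2 cardCout by (simp add: card_Un_disjoint)
      also have "2^p = 2 * (2::nat)^(p-1)" using t by (cases p) auto
      finally have eq: "card F = card Cin * (2 * 2^(p-1)) + (p - card Cin) * 2^(p-1)" .
      have le: "card Cin \<le> p" using CinP by (metis card_lessThan card_mono finite_lessThan)
      have "card Cin * (2 * 2^(p-1)) + (p - card Cin) * 2^(p-1) = 2^(p-1) * (p + card Cin)"
        using le by (simp add: algebra_simps diff_mult_distrib)
      moreover have "2^(p-1) * (p + L) \<le> 2^(p-1) * (p + card Cin)"
        using cardCin by simp
      ultimately show ?thesis unfolding k_def L_def[symmetric] using eq by simp
    qed
    have FX: "G \<subseteq> X" if "G \<in> F" for G
      using that i unfolding F_def F1_def F2_def X_def Cin_def Cout_def by auto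
    have Fdisj: "G \<inter> G' = {}" if "G \<in> F" "G' \<in> F" "G \<noteq> G'" for G G'
    proof -
      have G1: "\<exists>c W. c \<in> Cin \<and> G = {(c, W)}" if "G \<in> F1" for G
        using that unfolding F1_def by auto
      have G2: "\<exists>c W. c \<in> Cout \<and> i \<notin> W \<and> G = {(c, W), (c, insert i W)}" if "G \<in> F2" for G
        using that unfolding F2_def by auto
      have CC: "c \<notin> Cout" if "c \<in> Cin" for c using that unfolding Cout_def by auto
      show ?thesis
      proof (cases "G \<in> F1")
        case True
        then obtain c W where c: "c \<in> Cin" "G = {(c, W)}" using G1 by blast
        show ?thesis
        proof (cases "G' \<in> F1")
          case True
          then obtain c' W' where c': "c' \<in> Cin" "G' = {(c', W')}" using G1 by blast
          then show ?thesis using c that(3) by auto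
        next
          case False
          then have "G' \<in> F2" using that(2) unfolding F_def by auto
          then obtain c' W' where c': "c' \<in> Cout" "G' = {(c', W'), (c', insert i W')}" using G2 by blast
          then show ?thesis using c CC by auto
        qed
      next
        case False
        then have "G \<in> F2" using that(1) unfolding F_def by auto
        then obtain c W where c: "c \<in> Cout" "i \<notin> W" "G = {(c, W), (c, insert i W)}" using G2 by blast
        show ?thesis
        proof (cases "G' \<in> F1")
          case True
          then obtain c' W' where c': "c' \<in> Cin" "G' = {(c', W')}" using G1 by blast
          then show ?thesis using c CC by auto
        next
          case False
          then have "G' \<in> F2" using that(2) unfolding F_def by auto
          then obtain c' W' where c': "c' \<in> Cout" "i \<notin> W'" "G' = {(c', W'), (c', insert i W')}"
            using G2 by blast
          show ?thesis
          proof (rule ccontr)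
            assume "G \<inter> G' \<noteq> {}"
            then have "c = c'" and "W = W' \<or> W = insert i W' \<or> insert i W = W' \<or> insert i W = insert i W'"
              using c c' by auto
            then have "W = W'" using c c' by (metis Diff_insert_absorb insertI1)
            then show False using c c' that(3) \<open>c = c'\<close> by simp
          qed
        qed
      qed
    qed
    have Fspan: "in_col_span Z2 t p A (h' ` G) i" if G: "G \<in> F" for G
    proof (cases "G \<in> F1")
      case True
      then obtain c W where cW: "c \<in> Cin" "W \<in> Pow {..<p}" "G = {(c, W)}" unfolding F1_def by auto
      then obtain r0 where r0: "r0 < L" "sym c r0 = i" unfolding Cin_def by auto
      have inX: "(c, W) \<in> X" using FX G cW by auto
      have Av: "A r0 (h' (c, W)) l = (if sym c r0 = l then 1 else 0)" for l
        unfolding A_def using r0(1) hh'[OF inX] by simp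
      have "\<forall>l<p. A r0 (h' (c, W)) l = (if l = i then 1 else 0)"
        unfolding Av r0(2) by auto
      then have "in_col_span Z2 t p A {h' (c, W)} i"
        using r0 Lt by (intro Z2_span_single[OF A01, of r0]) auto
      then show ?thesis using cW by simp
    next
      case False
      then have "G \<in> F2" using G unfolding F_def by auto
      then obtain c W where cW: "c \<in> Cout" "W \<subseteq> {..<p} - {i}" "G = {(c, W), (c, insert i W)}"
        unfolding F2_def by auto
      have inX: "(c, W) \<in> X" "(c, insert i W) \<in> X" using FX G cW by auto
      have ne: "h' (c, W) \<noteq> h' (c, insert i W)"
      proof
        assume "h' (c, W) = h' (c, insert i W)"
        then have "(c, W) = (c, insert i W)" using h' inX unfolding bij_betw_def inj_on_def by blast
        then show False using cW by auto
      qed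
      have Av1: "A L (h' (c, W)) l = (if l \<in> W then 1 else 0)" for l
        unfolding A_def using hh'[OF inX(1)] by simp
      have Av2: "A L (h' (c, insert i W)) l = (if l \<in> insert i W then 1 else 0)" for l
        unfolding A_def using hh'[OF inX(2)] by simp
      have iW: "i \<notin> W" using cW(2) by auto
      have "\<forall>l<p. (A L (h' (c, W)) l + A L (h' (c, insert i W)) l) mod 2 = (if l = i then 1 else 0)"
        unfolding Av1 Av2 using iW by auto
      then have "in_col_span Z2 t p A {h' (c, W), h' (c, insert i W)} i"
        using Lt by (intro Z2_span_pair[OF A01 _ ne]) auto
      then show ?thesis using cW by simp
    qed
    obtain e where e: "bij_betw e {0..<card F} F" using ex_bij_betw_nat_finite[OF finF] by blast
    show "\<exists>S. (\<forall>j<k. S j \<subseteq> {0..<card X}) \<and> (\<forall>j<k. \<forall>j'<k. j \<noteq> j' \<longrightarrow> S j \<inter> S j' = {}) \<and>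
              (\<forall>j<k. in_col_span Z2 t p A (S j) i)"
    proof (intro exI[of _ "\<lambda>j. h' ` e j"] conjI allI impI)
      fix j assume j: "j < k"
      then have ej: "e j \<in> F" using e cardF unfolding bij_betw_def by auto
      show "h' ` e j \<subseteq> {0..<card X}" using FX[OF ej] h' unfolding bij_betw_def by auto
      show "in_col_span Z2 t p A (h' ` e j) i" using Fspan[OF ej] .
    next
      fix j j' assume j: "j < k" and j': "j' < k" and jj: "j \<noteq> j'"
      then have ej: "e j \<in> F" "e j' \<in> F" using e cardF unfolding bij_betw_def by auto
      have "e j \<noteq> e j'" using e j j' jj cardF unfolding bij_betw_def inj_on_def by auto
      then have dis: "e j \<inter> e j' = {}" using Fdisj ej by auto
      have "inj_on h' X" using h' unfolding bij_betw_def by auto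
      then show "h' ` e j \<inter> h' ` e j' = {}"
        using dis FX[OF ej(1)] FX[OF ej(2)] unfolding inj_on_def by blast
    qed
  qed
  then show ?thesis unfolding cardX k_def by blast
qed




lemma g_upper:
  assumes s: "s > 1" and t: "t > 0"
  shows "g_st s t \<le> ereal ((real_of_rat s + 1) / (2 * real_of_rat s))"
  unfolding g_st_def
proof (rule Sup_least)
  fix x assume "x \<in> {ereal (real k / real m) | k m. m > 0 \<and>
      (\<exists>(R :: nat ring) p A. field R \<and> finite (carrier R) \<and> of_nat p = s * of_nat t \<and>
         is_PIR_array_code R t m p k A)}"
  then obtain k m R p A where x: "x = ereal (real k / real m)" "m > 0" "field R"
    "of_nat p = s * of_nat t" "is_PIR_array_code R t m p k A" by blast
  define rs where "rs = real_of_rat s"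
  have rs: "rs > 1" unfolding rs_def using s by (simp add: of_rat_less_1_iff one_less_of_rat_iff)
  have "real_of_rat (of_nat p) = real_of_rat (s * of_nat t)" using x(4) by simp
  then have rp: "real p = rs * real t" unfolding rs_def by (simp add: of_rat_mult)
  have comb: "2 * p * k \<le> m * (p + t)" using upper_comb[OF x(3,5)] .
  then have "real (2 * p * k) \<le> real (m * (p + t))" by (simp only: of_nat_le_iff)
  then have "2 * (rs * real t) * real k \<le> real m * (rs * real t + real t)"
    unfolding rp[symmetric] by simp
  then have "(2 * rs * real k) * real t \<le> (real m * (rs + 1)) * real t"
    by (simp add: algebra_simps)
  then have "2 * rs * real k \<le> real m * (rs + 1)" using t by simp
  then have "real k / real m \<le> (rs + 1) / (2 * rs)"
    using rs x(2) by (simp add: field_simps)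
  then show "x \<le> ereal ((real_of_rat s + 1) / (2 * real_of_rat s))"
    unfolding x(1) rs_def by simp
qed

lemma g_lower:
  assumes s: "s > 1" and t: "t > 0" and st: "s * of_nat t \<in> \<int>"
  shows "ereal ((real_of_rat s + 1) / (2 * real_of_rat s) - 1 / (2 * real_of_rat s * real t)) \<le> g_st s t"
proof -
  define rs where "rs = real_of_rat s"
  have rs: "rs > 1" unfolding rs_def using s by (simp add: one_less_of_rat_iff)
  obtain z where z: "s * of_nat t = of_int z" using st by (auto elim: Ints_cases)
  have "of_int z > (0::rat)" using z s t by (metis mult_pos_pos of_nat_0_less_iff zero_less_one less_trans)
  then have zpos: "z > 0" by simp
  define p where "p = nat z"
  have sp: "of_nat p = s * of_nat t" unfolding p_def using z zpos by simp
  have "real_of_rat (of_nat p) = real_of_rat (s * of_nat t)" using sp by simp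
  then have rp: "real p = rs * real t" unfolding rs_def by (simp add: of_rat_mult)
  have "real t < real p" unfolding rp using rs t by simp
  then have tp: "t < p" by simp
  obtain A where A: "is_PIR_array_code Z2 t (p * 2^p) p (2^(p-1) * (p + (t - 1))) A"
    using construction[OF t tp] by blast
  have p0: "p > 0" using tp by simp
  have mem: "ereal (real (2^(p-1) * (p + (t - 1))) / real (p * 2^p)) \<in>
     {ereal (real k / real m) | k m. m > 0 \<and>
      (\<exists>(R :: nat ring) p A. field R \<and> finite (carrier R) \<and> of_nat p = s * of_nat t \<and>
         is_PIR_array_code R t m p k A)}"
    using A sp Z2_field p0 by (intro CollectI exI conjI) (auto simp: Z2_def)
  have "(2::nat)^p = 2 * 2^(p-1)" using p0 by (cases p) auto
  then have e1: "real (2^(p-1) * (p + (t - 1))) / real (p * 2^p) = (real p + real t - 1) / (2 * real p)"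
    using p0 t by (simp add: of_nat_diff field_simps)
  have e2: "(rs + 1) / (2 * rs) - 1 / (2 * rs * real t) = (real p + real t - 1) / (2 * real p)"
    unfolding rp using rs t by (simp add: field_simps)
  show ?thesis
    using Sup_upper[OF mem] unfolding g_st_def e1 rs_def[symmetric] e2 .
qed




theorem theorem13:
  fixes s :: rat
  assumes "s > 1"
  shows "g_s s = ereal (real_of_rat ((s + 1) / (2 * s)))"
proof -
  define T where "T = {t :: nat. t > 0 \<and> s * of_nat t \<in> \<int>}"
  define F where "F = inf sequentially (principal T)"
  define rs where "rs = real_of_rat s"
  have rs: "rs > 1" unfolding rs_def using assms by (simp add: one_less_of_rat_iff)
  define L0 where "L0 = (rs + 1) / (2 * rs)"
  have L0eq: "real_of_rat ((s + 1) / (2 * s)) = L0"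
    unfolding L0_def rs_def by (simp add: of_rat_divide of_rat_add of_rat_mult)
  have Fnb: "F \<noteq> bot"
  proof
    assume "F = bot"
    then have "eventually (\<lambda>_. False) F" by simp
    then have "eventually (\<lambda>x. x \<in> T \<longrightarrow> False) sequentially"
      unfolding F_def eventually_inf_principal .
    then obtain N where N: "\<forall>n\<ge>N. n \<notin> T" unfolding eventually_sequentially by blast
    obtain a b where ab: "quotient_of s = (a, b)" by (cases "quotient_of s")
    have b0: "b > 0" using ab quotient_of_denom_pos by blast
    have sab: "s = of_int a / of_int b" using ab quotient_of_div by blast
    define n where "n = nat b * (N + 1)"
    have "s * of_nat n = of_int (a * (int N + 1))"
      unfolding n_def sab using b0 by (simp add: field_simps)
    then have "n \<in> T" unfolding T_def n_def using b0 by simp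
    moreover have "n \<ge> N"
    proof -
      have "1 \<le> nat b" using b0 by simp
      then have "1 * (N + 1) \<le> nat b * (N + 1)" by (rule mult_le_mono1)
      then show ?thesis unfolding n_def by simp
    qed
    ultimately show False using N by blast
  qed
  have lower: "eventually (\<lambda>t. ereal (L0 - 1 / (2 * rs * real t)) \<le> g_st s t) F"
    unfolding F_def eventually_inf_principal T_def L0_def rs_def
    using g_lower[OF assms] by (intro always_eventually) auto
  have upper: "eventually (\<lambda>t. g_st s t \<le> ereal L0) F"
    unfolding F_def eventually_inf_principal T_def L0_def rs_def
    using g_upper[OF assms] by (intro always_eventually) auto
  have "(\<lambda>t. L0 - (1 / (2 * rs)) / real t) \<longlonglongrightarrow> L0 - 0"
    by (intro tendsto_diff tendsto_const lim_const_over_n)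
  then have "(\<lambda>t. L0 - 1 / (2 * rs * real t)) \<longlonglongrightarrow> L0" by simp
  then have "((\<lambda>t. ereal (L0 - 1 / (2 * rs * real t))) \<longlongrightarrow> ereal L0) sequentially"
    by (simp add: lim_ereal)
  then have lim1: "((\<lambda>t. ereal (L0 - 1 / (2 * rs * real t))) \<longlongrightarrow> ereal L0) F"
    unfolding F_def by (rule tendsto_mono[rotated]) simp
  have "(g_st s \<longlongrightarrow> ereal L0) F"
    by (rule tendsto_sandwich[OF lower upper lim1 tendsto_const])
  then have "Limsup F (g_st s) = ereal L0" by (rule lim_imp_Limsup[OF Fnb])
  then show ?thesis unfolding g_s_def L0eq T_def[symmetric] F_def[symmetric] by simp
qed


end
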